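(* Let $m$ be a positive integer with at least two distinct prime divisors. Then the difference graph $\mathcal{D}(\mathbb{Z}_m)$ is empty (has no edges) if and only if $m=pq$ where $p$ and $q$ are two distinct primes.
   Context: For a finite group $G$ with identity $e$: the intersection power graph $\mathcal{G}_I(G)$ has vertex set $G$, two distinct non-identity vertices $x,y$ being adjacent iff $\langle x\rangle\cap\langle y\rangle\neq\{e\}$, and $e$ being adjacent to every other vertex. The power graph $\mathcal{P}(G)$ has vertex set $G$, two distinct vertices being adjacent iff one is a power of the other. The difference graph $\mathcal{D}(G)$ is the graph on vertex set $G$ with edge set $E(\mathcal{G}_I(G))\setminus E(\mathcal{P}(G))$, with all isolated vertices removed. $\mathbb{Z}_m$ is the cyclic group of order $m$. *)

theory Defs
  imports "HOL-Algebra.Algebra" "HOL-Computational_Algebra.Primes"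
begin

definition intersection_power_edges :: "('a, 'b) monoid_scheme \<Rightarrow> 'a set set" where
  "intersection_power_edges G =
     {{x, y} | x y. x \<in> carrier G \<and> y \<in> carrier G \<and> x \<noteq> y \<and>
        (x = \<one>\<^bsub>G\<^esub> \<or> y = \<one>\<^bsub>G\<^esub> \<or>
         generate G {x} \<inter> generate G {y} \<noteq> {\<one>\<^bsub>G\<^esub>})}"

definition power_graph_edges :: "('a, 'b) monoid_scheme \<Rightarrow> 'a set set" where
  "power_graph_edges G =
     {{x, y} | x y. x \<in> carrier G \<and> y \<in> carrier G \<and> x \<noteq> y \<and>
        ((\<exists>k::nat. y = x [^]\<^bsub>G\<^esub> k) \<or> (\<exists>k::nat. x = y [^]\<^bsub>G\<^esub> k))}"

text \<open>Edge set of the difference graph D(G) (removing isolated vertices does not change edges).\<close>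
definition difference_graph_edges :: "('a, 'b) monoid_scheme \<Rightarrow> 'a set set" where
  "difference_graph_edges G = intersection_power_edges G - power_graph_edges G"

end

theory Submission imports Defs begin

lemma helper:
  fixes x y m :: int
  assumes "m > 0" "gcd x m dvd y" "0 \<le> y" "y < m"
  shows "\<exists>k::int. y = k * x mod m"
proof -
  obtain u v where uv: "u * x + v * m = gcd x m" using bezout_int by blast
  obtain t where t: "y = gcd x m * t" using assms(2) by (auto elim: dvdE)
  have "y = t*(u*x + v*m)" using uv t by simp
  then have "y mod m = (t*u*x + (t*v)*m) mod m" by (simp add: algebra_simps)
  also have "\<dots> = t*u*x mod m" by simp
  finally have "y = (t*u)*x mod m" using assms by simp
  then show ?thesis by blast
qed

lemma both_dvd_zero:
  fixes x P Q :: int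
  assumes "Factorial_Ring.prime P" "Factorial_Ring.prime Q" "P \<noteq> Q" "P dvd x" "Q dvd x" "0 \<le> x" "x < P * Q"
  shows "x = 0"
proof -
  have "coprime P Q" using assms by (simp add: primes_coprime)
  then have "P * Q dvd x" using assms by (simp add: divides_mult)
  show ?thesis
  proof (rule ccontr)
    assume "x \<noteq> 0"
    then have "x > 0" using assms by simp
    then have "P * Q \<le> x" using \<open>P * Q dvd x\<close> by (simp add: zdvd_imp_le)
    then show False using assms by simp
  qed
qed

lemma core:
  fixes x y z a b P Q :: int
  assumes pq: "Factorial_Ring.prime P" "Factorial_Ring.prime Q" "P \<noteq> Q"
    and xy: "0 \<le> x" "x < P*Q" "0 \<le> y" "y < P*Q" "x \<noteq> 0" "y \<noteq> 0" "z \<noteq> 0"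
    and z: "z = a * x mod (P*Q)" "z = b * y mod (P*Q)"
  shows "(\<exists>k::int. y = k*x mod (P*Q)) \<or> (\<exists>k. x = k*y mod (P*Q))"
proof -
  let ?m = "P*Q"
  have m0: "?m > 0" using pq by (simp add: prime_gt_0_int)
  have ndx: "\<not> (P dvd x \<and> Q dvd x)" using both_dvd_zero[OF pq] xy by blast
  have ndy: "\<not> (P dvd y \<and> Q dvd y)" using both_dvd_zero[OF pq] xy by blast
  have z0: "0 \<le> z" "z < ?m" using z m0 by auto
  have cop: "coprime u ?m \<or> P dvd u \<or> Q dvd u" for u
  proof (cases "P dvd u \<or> Q dvd u")
    case False
    then have "coprime P u" "coprime Q u" using pq by (simp_all add: prime_imp_coprime)
    then show ?thesis by (simp add: coprime_commute)
  qed auto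
  have dz: "D dvd z" if "D dvd w" "D dvd ?m" "z = c * w mod ?m" for D w c
    using that by (simp add: dvd_mod_iff)
  show ?thesis
  proof (cases "coprime x ?m")
    case True
    then have "gcd x ?m dvd y" by simp
    then show ?thesis using helper[OF m0] xy by blast
  next
    case nx: False
    show ?thesis
    proof (cases "coprime y ?m")
      case True
      then have "gcd y ?m dvd x" by simp
      then show ?thesis using helper[OF m0] xy by blast
    next
      case ny: False
      have cx: "P dvd x \<or> Q dvd x" using cop nx by blast
      have cy: "P dvd y \<or> Q dvd y" using cop ny by blast
      { assume "P dvd x" "P dvd y"
        then have "\<not> Q dvd x" using ndx by blast
        then have "coprime x Q" using pq by (metis coprime_commute prime_imp_coprime)
        then have "gcd x ?m = gcd x P" by (simp add: gcd_mult_right_right_cancel)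
        then have "gcd x ?m dvd y" using \<open>P dvd y\<close> by (metis dvd_trans gcd_dvd2)
        then have ?thesis using helper[OF m0] xy by blast }
      moreover
      { assume "Q dvd x" "Q dvd y"
        then have "\<not> P dvd x" using ndx by blast
        then have "coprime x P" using pq by (metis coprime_commute prime_imp_coprime)
        then have "gcd x ?m = gcd x Q" by (simp add: gcd_mult_right_left_cancel)
        then have "gcd x ?m dvd y" using \<open>Q dvd y\<close> by (metis dvd_trans gcd_dvd2)
        then have ?thesis using helper[OF m0] xy by blast }
      moreover
      { assume "P dvd x" "Q dvd y"
        then have "P dvd z" "Q dvd z" using dz[OF _ _ z(1)] dz[OF _ _ z(2)] by auto
        then have False using both_dvd_zero[OF pq] z0 xy by blast }
      moreover
      { assume "Q dvd x" "P dvd y"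
        then have "P dvd z" "Q dvd z" using dz[OF _ _ z(1)] dz[OF _ _ z(2)] by auto
        then have False using both_dvd_zero[OF pq] z0 xy by blast }
      ultimately show ?thesis using cx cy by blast
    qed
  qed
qed


lemma gen_eq:
  assumes "x \<in> carrier (integer_mod_group m)"
  shows "generate (integer_mod_group m) {x} = {k * x mod int m | k. True}"
  using group.generate_pow[OF group_integer_mod_group assms]
  by (simp add: int_pow_integer_mod_group)

lemma to_nat_pow:
  assumes "m > 0" "y = k * x mod int m"
  shows "\<exists>k'::nat. y = x [^]\<^bsub>integer_mod_group m\<^esub> k'"
proof -
  have "int (nat (k mod int m)) = k mod int m" using assms by simp
  then have "x [^]\<^bsub>integer_mod_group m\<^esub> (nat (k mod int m)) = y"
    using assms by (simp add: mod_mult_left_eq)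
  then show ?thesis by metis
qed

theorem theorem4p3:
  fixes m :: nat
  assumes "m > 0" and "card (prime_factors m) \<ge> 2"
  shows "difference_graph_edges (integer_mod_group m) = {} \<longleftrightarrow>
         (\<exists>p q. Factorial_Ring.prime p \<and> Factorial_Ring.prime q \<and> p \<noteq> q \<and> m = p * q)"
proof
  let ?G = "integer_mod_group m"
  have car: "carrier ?G = {0..<int m}" using assms by (simp add: carrier_integer_mod_group)
  assume E: "difference_graph_edges ?G = {}"
  obtain p q where pq: "p \<in> prime_factors m" "q \<in> prime_factors m" "p \<noteq> q"
  proof -
    have "\<not> card (prime_factors m) \<le> 1" using assms by simp
    then obtain A where "A \<subseteq> prime_factors m" "card A = 2"
      by (meson assms(2) obtain_subset_with_card_n)
    then show ?thesis using that by (auto simp: card_2_iff)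
  qed
  have pp: "Factorial_Ring.prime p" "Factorial_Ring.prime q" using pq by auto
  have dv: "p dvd m" "q dvd m" using pq by auto
  have "p * q dvd m" using dv pp pq(3) by (simp add: divides_mult primes_coprime)
  then have le: "p * q \<le> m" using assms(1) by (simp add: dvd_imp_le)
  show "\<exists>p q. Factorial_Ring.prime p \<and> Factorial_Ring.prime q \<and> p \<noteq> q \<and> m = p * q"
  proof (rule ccontr)
    assume "\<not> ?thesis"
    then have "m \<noteq> p * q" using pp pq(3) by blast
    then have lt: "p * q < m" using le by simp
    then have ilt: "int p * int q < int m" by (metis of_nat_less_iff of_nat_mult)
    have p2: "p \<ge> 2" "q \<ge> 2" using pp by (auto simp: prime_ge_2_nat)
    have "p < p * q" "q < p * q" using p2 by auto
    then have "p < m" "q < m" using lt by linarith+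
    then have inc: "int p \<in> carrier ?G" "int q \<in> carrier ?G" "int (p*q) \<in> carrier ?G"
      using lt unfolding car by (simp_all flip: of_nat_mult)
    have "int (p*q) \<in> generate ?G {int p}"
    proof -
      have "int (p*q) = int q * int p mod int m" using ilt by (simp add: mult.commute)
      then show ?thesis unfolding gen_eq[OF inc(1)] by blast
    qed
    moreover have "int (p*q) \<in> generate ?G {int q}"
    proof -
      have "int (p*q) = int p * int q mod int m" using ilt by simp
      then show ?thesis unfolding gen_eq[OF inc(2)] by blast
    qed
    moreover have "int (p*q) \<noteq> 0" using p2 by simp
    ultimately have ne: "generate ?G {int p} \<inter> generate ?G {int q} \<noteq> {\<one>\<^bsub>?G\<^esub>}"
      by (metis IntI one_integer_mod_group singletonD)
    have i1: "{int p, int q} \<in> intersection_power_edges ?G"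
      unfolding intersection_power_edges_def
      by (rule CollectI, rule exI[of _ "int p"], rule exI[of _ "int q"]) (use inc ne pq(3) in simp)
    have nd: "\<not> (\<exists>k::nat. int b = int a [^]\<^bsub>?G\<^esub> k)" if "a dvd m" "Factorial_Ring.prime a" "Factorial_Ring.prime b" "a \<noteq> b" for a b
    proof
      assume "\<exists>k::nat. int b = int a [^]\<^bsub>?G\<^esub> k"
      then obtain k where k: "int b = (int k * int a) mod int m" by auto
      have "int a dvd (int k * int a) mod int m" using that(1) by (simp add: dvd_mod_iff)
      then have "a dvd b" using k by (metis int_dvd_int_iff)
      then show False using that by (simp add: primes_dvd_imp_eq)
    qed
    have "{int p, int q} \<notin> power_graph_edges ?G"
    proof
      assume "{int p, int q} \<in> power_graph_edges ?G"
      then obtain x y where xy: "{int p, int q} = {x, y}"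
        "(\<exists>k::nat. y = x [^]\<^bsub>?G\<^esub> k) \<or> (\<exists>k::nat. x = y [^]\<^bsub>?G\<^esub> k)"
        unfolding power_graph_edges_def by blast
      have n1: "\<not> (\<exists>k::nat. int q = int p [^]\<^bsub>?G\<^esub> k)" using nd[OF dv(1) pp pq(3)] .
      have n2: "\<not> (\<exists>k::nat. int p = int q [^]\<^bsub>?G\<^esub> k)" using nd[OF dv(2) pp(2,1)] pq(3) by simp
      from xy(1) have "(x = int p \<and> y = int q) \<or> (x = int q \<and> y = int p)"
        by (simp add: doubleton_eq_iff) blast
      then show False
      proof (elim disjE conjE)
        assume "x = int p" "y = int q" then show False using xy(2) n1 n2 by simp
      next
        assume "x = int q" "y = int p" then show False using xy(2) n1 n2 by simp
      qed
    qed
    then have "{int p, int q} \<in> difference_graph_edges ?G"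
      unfolding difference_graph_edges_def using i1 by (intro DiffI)
    then show False using E by simp
  qed
next
  let ?G = "integer_mod_group m"
  have car: "carrier ?G = {0..<int m}" using assms by (simp add: carrier_integer_mod_group)
  assume "\<exists>p q. Factorial_Ring.prime p \<and> Factorial_Ring.prime q \<and> p \<noteq> q \<and> m = p * q"
  then obtain p q where pq: "Factorial_Ring.prime p" "Factorial_Ring.prime q" "p \<noteq> q" "m = p * q" by blast
  have ipq: "Factorial_Ring.prime (int p)" "Factorial_Ring.prime (int q)" "int p \<noteq> int q" "int m = int p * int q"
    using pq by auto
  have "e \<in> power_graph_edges ?G" if e: "e \<in> intersection_power_edges ?G" for e
  proof -
    obtain x y where xy: "e = {x, y}" "x \<in> carrier ?G" "y \<in> carrier ?G" "x \<noteq> y"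
      "x = 0 \<or> y = 0 \<or> generate ?G {x} \<inter> generate ?G {y} \<noteq> {0}"
      using e unfolding intersection_power_edges_def by auto
    have "(\<exists>k::int. y = k*x mod int m) \<or> (\<exists>k::int. x = k*y mod int m)"
    proof (cases "x = 0 \<or> y = 0")
      case True
      show ?thesis
      proof (cases "x = 0")
        case True
        then have "x = 0 * y mod int m" by simp
        then show ?thesis by blast
      next
        case False
        then have "y = 0 * x mod int m" using \<open>x = 0 \<or> y = 0\<close> by simp
        then show ?thesis by blast
      qed
    next
      case False
      then have "generate ?G {x} \<inter> generate ?G {y} \<noteq> {0}" using xy by blast
      moreover have "0 \<in> generate ?G {x} \<inter> generate ?G {y}"
      proof -
        have "0 = 0 * x mod int m" "0 = 0 * y mod int m" by simp_all
        then show ?thesis unfolding gen_eq[OF xy(2)] gen_eq[OF xy(3)] by blast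
      qed
      ultimately obtain z where zz: "z \<in> generate ?G {x}" "z \<in> generate ?G {y}" "z \<noteq> 0" by blast
      obtain a where za: "z = a * x mod int m" using zz(1) unfolding gen_eq[OF xy(2)] by blast
      obtain b where zb: "z = b * y mod int m" using zz(2) unfolding gen_eq[OF xy(3)] by blast
      have z: "z = a * x mod int m" "z = b * y mod int m" "z \<noteq> 0" using za zb zz(3) by simp_all
      show ?thesis using core[OF ipq(1-3), of x y z a b] z xy(2,3) False car ipq(4) by auto
    qed
    then have "(\<exists>k::nat. y = x [^]\<^bsub>?G\<^esub> k) \<or> (\<exists>k::nat. x = y [^]\<^bsub>?G\<^esub> k)"
      using to_nat_pow[OF assms(1)] by blast
    then show ?thesis unfolding power_graph_edges_def using xy by blast
  qed
  then show "difference_graph_edges ?G = {}"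
    unfolding difference_graph_edges_def by blast
qed

end
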